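(* During the Part I procedure, suppose a bridge step processes the edge $xy$ and forms a blossom. Let $v$ be a vertex that was odd before this step and lies on the tree path from (the blossom containing) $y$ to the base of the newly formed blossom, and let $uv\notin M$ be an edge with $u$ even (possibly $u$ in a different tree). Then $v$ becomes even in this step, and $\mathrm{lcp}(x)+\mathrm{lcp}(y)\le \mathrm{lcp}(v)+\mathrm{lcp}(u)$.
   Context: Let $G=(V,E)$ be a finite undirected graph and $M$ a matching in $G$; free vertices and $\mathit{mate}(v)$ are as usual. The Part I procedure maintains a search structure $S$: a forest whose nodes are either single (odd) vertices or blossoms (disjoint vertex sets with a distinguished base vertex), each tree rooted at a blossom containing a free vertex. Vertices in $S$ are labelled even (those in blossoms) or odd; vertices not in $S$ are unlabelled. A vertex is born even/odd according to the label it receives when inserted. The procedure maintains $\mathrm{lcp}(v)$ for even vertices and $\mathrm{lcp}_{\mathrm{odd}}(v)$ for vertices born odd. The blossom nodes currently in $S$ are the maximal blossoms. Phase $0$: every free vertex $v$ becomes the root of its own tree as a trivial blossom $\{v\}$ with base $v$, even, $\mathrm{lcp}(v)=0$. For $\Delta=1,2,\dots$, phase $\Delta$ does: (i) if $\Delta$ is even, growth steps: while some even vertex $v$ with $\mathrm{lcp}(v)=\Delta-2$ has a neighbour $x$ not in $S$, add $x$ as an odd child of the blossom containing $v$ with $\mathrm{lcp}_{\mathrm{odd}}(x)=\Delta-1$, and $\mathit{mate}(x)$ as a child of $x$, as a trivial even blossom with $\mathrm{lcp}(\mathit{mate}(x))=\Delta$; (ii) bridge steps: while there is a non-matching edge $xy$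 with $x,y$ even, in different maximal blossoms $B_x,B_y$, and $\mathrm{lcp}(x)+\mathrm{lcp}(y)=2\Delta-2$: if $B_x,B_y$ lie in different trees the procedure stops; otherwise let $B$ be the lowest common ancestor of $B_x,B_y$; every odd vertex $z$ on the tree paths from $B_x$ and $B_y$ to $B$ becomes even with $\mathrm{lcp}(z)=\mathrm{lcp}(x)+1+\mathrm{lcp}(y)-\mathrm{lcp}_{\mathrm{odd}}(z)$, and $B$ together with all blossoms and odd vertices on both paths is merged into one new blossom with base equal to the base of $B$, replacing $B$ in the tree. *)

theory Defs
  imports Main
begin

definition graph :: "'a set \<Rightarrow> 'a set set \<Rightarrow> bool" where
  "graph V E \<longleftrightarrow> finite V \<and> (\<forall>e\<in>E. \<exists>a b. e = {a, b} \<and> a \<noteq> b \<and> a \<in> V \<and> b \<in> V)"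

definition matching :: "'a set set \<Rightarrow> 'a set set \<Rightarrow> bool" where
  "matching E M \<longleftrightarrow> M \<subseteq> E \<and> (\<forall>e1\<in>M. \<forall>e2\<in>M. e1 \<noteq> e2 \<longrightarrow> e1 \<inter> e2 = {})"

definition free :: "'a set \<Rightarrow> 'a set set \<Rightarrow> 'a \<Rightarrow> bool" where
  "free V M v \<longleftrightarrow> v \<in> V \<and> (\<forall>e\<in>M. v \<notin> e)"

definition mate :: "'a set set \<Rightarrow> 'a \<Rightarrow> 'a" where
  "mate M v = (THE u. {v, u} \<in> M)"

text \<open>Nodes of the forest: Inl z is a single (odd) vertex z, Inr B is a blossom B.\<close>
type_synonym 'a node = "'a + 'a set"

datatype stage = Grow | Bridge | Stopped

text \<open>State of the Part I procedure: the nodes of S, parent pointers, bases of blossoms,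
  lcp (even vertices), lcp_odd (vertices born odd), current phase Delta and the sub-stage
  of the current phase (growth steps / bridge steps / procedure stopped).\<close>
record 'a sstate =
  nodes :: "'a node set"
  par :: "'a node \<Rightarrow> 'a node option"
  bse :: "'a set \<Rightarrow> 'a"
  lcp :: "'a \<Rightarrow> nat"
  lcpo :: "'a \<Rightarrow> nat"
  delta :: nat
  stg :: stage

definition oddV :: "('a, 'b) sstate_scheme \<Rightarrow> 'a set" where
  "oddV s = {v. Inl v \<in> nodes s}"

definition blossoms :: "('a, 'b) sstate_scheme \<Rightarrow> 'a set set" where
  "blossoms s = {B. Inr B \<in> nodes s}"

definition evenV :: "('a, 'b) sstate_scheme \<Rightarrow> 'a set" where
  "evenV s = \<Union> (blossoms s)"

definition inS :: "('a, 'b) sstate_scheme \<Rightarrow> 'a set" where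
  "inS s = oddV s \<union> evenV s"

definition blossom_of :: "('a, 'b) sstate_scheme \<Rightarrow> 'a \<Rightarrow> 'a set" where
  "blossom_of s v = (THE B. B \<in> blossoms s \<and> v \<in> B)"

definition node_set :: "'a node \<Rightarrow> 'a set" where
  "node_set n = (case n of Inl z \<Rightarrow> {z} | Inr B \<Rightarrow> B)"

definition node_base :: "('a, 'b) sstate_scheme \<Rightarrow> 'a node \<Rightarrow> 'a" where
  "node_base s n = (case n of Inl z \<Rightarrow> z | Inr B \<Rightarrow> bse s B)"

definition anc :: "('a, 'b) sstate_scheme \<Rightarrow> 'a node \<Rightarrow> 'a node \<Rightarrow> bool" where
  "anc s n m \<longleftrightarrow> (n, m) \<in> {(p, q). p \<in> nodes s \<and> par s p = Some q}\<^sup>*"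

definition lca :: "('a, 'b) sstate_scheme \<Rightarrow> 'a node \<Rightarrow> 'a node \<Rightarrow> 'a node" where
  "lca s a b = (THE c. anc s a c \<and> anc s b c \<and> (\<forall>d. anc s a d \<and> anc s b d \<longrightarrow> anc s c d))"

definition tpath :: "('a, 'b) sstate_scheme \<Rightarrow> 'a node \<Rightarrow> 'a node \<Rightarrow> 'a node set" where
  "tpath s a c = {n. anc s a n \<and> anc s n c}"

definition same_tree :: "('a, 'b) sstate_scheme \<Rightarrow> 'a \<Rightarrow> 'a \<Rightarrow> bool" where
  "same_tree s x y \<longleftrightarrow>
     (\<exists>c. anc s (Inr (blossom_of s x)) c \<and> anc s (Inr (blossom_of s y)) c)"

definition init :: "'a set \<Rightarrow> 'a set set \<Rightarrow> 'a sstate" where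
  "init V M = \<lparr> nodes = {Inr {v} | v. free V M v}, par = (\<lambda>_. None), bse = the_elem,
      lcp = (\<lambda>_. 0), lcpo = (\<lambda>_. 0), delta = 1, stg = Grow \<rparr>"

definition growth_enabled :: "'a set set \<Rightarrow> 'a sstate \<Rightarrow> 'a \<Rightarrow> 'a \<Rightarrow> bool" where
  "growth_enabled E s v x \<longleftrightarrow> even (delta s) \<and> v \<in> evenV s \<and> lcp s v + 2 = delta s
      \<and> {v, x} \<in> E \<and> x \<notin> inS s"

definition grow :: "'a set set \<Rightarrow> 'a sstate \<Rightarrow> 'a \<Rightarrow> 'a \<Rightarrow> 'a sstate" where
  "grow M s v x = s\<lparr> nodes := nodes s \<union> {Inl x, Inr {mate M x}},
      par := (par s)(Inl x := Some (Inr (blossom_of s v)), Inr {mate M x} := Some (Inl x)),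
      bse := (bse s)({mate M x} := mate M x),
      lcpo := (lcpo s)(x := delta s - 1),
      lcp := (lcp s)(mate M x := delta s) \<rparr>"

definition bridge_enabled :: "'a set set \<Rightarrow> 'a set set \<Rightarrow> 'a sstate \<Rightarrow> 'a \<Rightarrow> 'a \<Rightarrow> bool" where
  "bridge_enabled E M s x y \<longleftrightarrow> {x, y} \<in> E \<and> {x, y} \<notin> M \<and> x \<in> evenV s \<and> y \<in> evenV s
      \<and> blossom_of s x \<noteq> blossom_of s y \<and> lcp s x + lcp s y + 2 = 2 * delta s"

definition merge :: "'a sstate \<Rightarrow> 'a \<Rightarrow> 'a \<Rightarrow> 'a sstate" where
  "merge s x y =
    (let a = Inr (blossom_of s x); b = Inr (blossom_of s y); c = lca s a b;
         P = tpath s a c \<union> tpath s b c;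
         Z = {z. Inl z \<in> P};
         N = \<Union> (node_set ` P)
     in s\<lparr> nodes := (nodes s - P) \<union> {Inr N},
           par := (\<lambda>n. if n = Inr N then par s c
                       else (case par s n of None \<Rightarrow> None
                             | Some p \<Rightarrow> if p \<in> P then Some (Inr N) else Some p)),
           bse := (bse s)(N := node_base s c),
           lcp := (\<lambda>z. if z \<in> Z then lcp s x + 1 + lcp s y - lcpo s z else lcp s z) \<rparr>)"

inductive step :: "'a set set \<Rightarrow> 'a set set \<Rightarrow> 'a sstate \<Rightarrow> 'a sstate \<Rightarrow> bool"
  for E M where
  growth: "stg s = Grow \<Longrightarrow> growth_enabled E s v x \<Longrightarrow> step E M s (grow M s v x)"
| growth_done: "stg s = Grow \<Longrightarrow> \<not> (\<exists>v x. growth_enabled E s v x) \<Longrightarrow>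
      step E M s (s\<lparr>stg := Bridge\<rparr>)"
| bridge_stop: "stg s = Bridge \<Longrightarrow> bridge_enabled E M s x y \<Longrightarrow> \<not> same_tree s x y \<Longrightarrow>
      step E M s (s\<lparr>stg := Stopped\<rparr>)"
| bridge_merge: "stg s = Bridge \<Longrightarrow> bridge_enabled E M s x y \<Longrightarrow> same_tree s x y \<Longrightarrow>
      step E M s (merge s x y)"
| next_phase: "stg s = Bridge \<Longrightarrow> \<not> (\<exists>x y. bridge_enabled E M s x y) \<Longrightarrow>
      step E M s (s\<lparr>delta := delta s + 1, stg := Grow\<rparr>)"

inductive reachable :: "'a set \<Rightarrow> 'a set set \<Rightarrow> 'a set set \<Rightarrow> 'a sstate \<Rightarrow> bool"
  for V E M where
  start: "reachable V E M (init V M)"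
| continue: "reachable V E M s \<Longrightarrow> step E M s s' \<Longrightarrow> reachable V E M s'"

end

theory Submission
  imports Defs
begin


lemma mate_lemma:
  assumes "graph V E" "matching E M" "e \<in> M" "z \<in> e"
  shows "\<exists>m. e = {z,m} \<and> m \<noteq> z \<and> mate M z = m \<and> mate M m = z"
proof -
  have eE: "e \<in> E" using assms(2,3) unfolding matching_def by (simp add: subset_iff)
  have "\<exists>a b. e = {a, b} \<and> a \<noteq> b \<and> a \<in> V \<and> b \<in> V" using assms(1) eE unfolding graph_def by simp
  then obtain a b where ab: "e = {a,b}" "a \<noteq> b" by blast
  obtain m where em: "e = {z,m}" "m \<noteq> z"
  proof (cases "z = a")
    case True then show ?thesis using that ab by simp
  next
    case False then have "z = b" using ab assms(4) by simp
    then show ?thesis using that[of a] ab by (simp add: insert_commute)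
  qed
  have uniq: "{w,u} = e" if "{w,u} \<in> M" "w \<in> e" for w u
  proof (rule ccontr)
    assume "{w,u} \<noteq> e"
    then have "{w,u} \<inter> e = {}" using assms(2,3) that(1) unfolding matching_def by simp
    then show False using that(2) by simp
  qed
  have "mate M z = m" unfolding mate_def
  proof (rule the_equality)
    show "{z,m} \<in> M" using em assms(3) by simp
  next
    fix u assume "{z,u} \<in> M"
    then have "{z,u} = {z,m}" using uniq[of z u] em by simp
    then show "u = m" using em(2) by (metis doubleton_eq_iff)
  qed
  moreover have "mate M m = z" unfolding mate_def
  proof (rule the_equality)
    show "{m,z} \<in> M" using em assms(3) by (simp add: insert_commute)
  next
    fix u assume "{m,u} \<in> M"
    then have "{m,u} = {z,m}" using uniq[of m u] em by simp
    then show "u = z" using em(2) by (metis doubleton_eq_iff)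
  qed
  ultimately show ?thesis using em by blast
qed

definition Rel :: "('a, 'b) sstate_scheme \<Rightarrow> ('a node \<times> 'a node) set" where
  "Rel s = {(p, q). p \<in> nodes s \<and> par s p = Some q}"

lemma anc_Rel: "anc s n m \<longleftrightarrow> (n, m) \<in> (Rel s)\<^sup>*"
  unfolding anc_def Rel_def by simp

lemma anc_pot:
  assumes h: "\<forall>p\<in>nodes s. \<forall>q. par s p = Some q \<longrightarrow> (h q :: nat) < h p"
    and "anc s n m"
  shows "n = m \<or> h m < h n"
proof -
  have "(n, m) \<in> (Rel s)\<^sup>*" using assms(2) anc_Rel by metis
  then show ?thesis
  proof (induction rule: rtrancl_induct)
    case base then show ?case by simp
  next
    case (step q r)
    then show ?case using h unfolding Rel_def by fastforce
  qed
qed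

lemma anc_nodes:
  assumes pa: "\<forall>p\<in>nodes s. \<forall>q. par s p = Some q \<longrightarrow> q \<in> nodes s"
    and "anc s n m" "n \<in> nodes s"
  shows "m \<in> nodes s"
proof -
  have "(n, m) \<in> (Rel s)\<^sup>*" using assms(2) anc_Rel by metis
  then show ?thesis
  proof (induction rule: rtrancl_induct)
    case base then show ?case using assms(3) by simp
  next
    case (step q r)
    then show ?case using pa unfolding Rel_def by fastforce
  qed
qed

lemma lca_prop:
  assumes h: "\<forall>p\<in>nodes s. \<forall>q. par s p = Some q \<longrightarrow> (h q :: nat) < h p"
    and ex: "anc s a d" "anc s b d"
  shows "anc s a (lca s a b) \<and> anc s b (lca s a b)"
proof -
  let ?D = "\<lambda>d. anc s a d \<and> anc s b d"
  have bnd: "\<forall>d. ?D d \<longrightarrow> h d < Suc (h a)" using anc_pot[OF h] by fastforce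
  obtain c where c: "?D c" "\<forall>d. ?D d \<longrightarrow> h d \<le> h c"
    using ex_has_greatest_nat[of ?D d h "Suc (h a)"] ex bnd by blast
  have sv: "single_valued (Rel s)" unfolding Rel_def single_valued_def by auto
  have low: "anc s c d'" if "?D d'" for d'
  proof -
    have "(a, c) \<in> (Rel s)\<^sup>*" "(a, d') \<in> (Rel s)\<^sup>*" using c that anc_Rel by metis+
    then have "(c, d') \<in> (Rel s)\<^sup>* \<or> (d', c) \<in> (Rel s)\<^sup>*"
      using single_valued_confluent[OF sv] by blast
    then show ?thesis
    proof
      assume "(d', c) \<in> (Rel s)\<^sup>*"
      then have "d' = c \<or> h c < h d'" using anc_pot[OF h] anc_Rel by metis
      then show ?thesis using c that by (auto simp: anc_def)
    qed (simp add: anc_Rel)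
  qed
  have "lca s a b = c" unfolding lca_def
  proof (rule the_equality)
    show "anc s a c \<and> anc s b c \<and> (\<forall>d. anc s a d \<and> anc s b d \<longrightarrow> anc s c d)"
      using c low by blast
  next
    fix c' assume c': "anc s a c' \<and> anc s b c' \<and> (\<forall>d. anc s a d \<and> anc s b d \<longrightarrow> anc s c' d)"
    then have "anc s c' c" "anc s c c'" using c low by blast+
    then have "c' = c \<or> h c < h c'" "c = c' \<or> h c' < h c" using anc_pot[OF h] by blast+
    then show "c' = c" by auto
  qed
  then show ?thesis using c by simp
qed

lemma blossom_of_prop:
  assumes "\<forall>B1\<in>blossoms s. \<forall>B2\<in>blossoms s. B1 \<noteq> B2 \<longrightarrow> B1 \<inter> B2 = {}"
    and "u \<in> evenV s"
  shows "blossom_of s u \<in> blossoms s \<and> u \<in> blossom_of s u"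
proof -
  obtain B where B: "B \<in> blossoms s" "u \<in> B" using assms(2) unfolding evenV_def by blast
  have "blossom_of s u = B" unfolding blossom_of_def
    by (rule the_equality) (use B assms(1) in blast)+
  then show ?thesis using B by simp
qed



definition Inv :: "'a set \<Rightarrow> 'a set set \<Rightarrow> 'a set set \<Rightarrow> 'a sstate \<Rightarrow> bool" where
"Inv V E M s \<longleftrightarrow>
 (\<forall>z. lcpo s z < delta s) \<and>
 (\<forall>u\<in>evenV s. even (lcp s u)) \<and>
 (\<forall>z\<in>oddV s. odd (lcpo s z)) \<and>
 oddV s \<inter> evenV s = {} \<and>
 (\<forall>B1\<in>blossoms s. \<forall>B2\<in>blossoms s. B1 \<noteq> B2 \<longrightarrow> B1 \<inter> B2 = {}) \<and>
 (\<forall>p\<in>nodes s. \<forall>q. par s p = Some q \<longrightarrow> q \<in> nodes s) \<and>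
 (\<exists>h::'a node \<Rightarrow> nat. \<forall>p\<in>nodes s. \<forall>q. par s p = Some q \<longrightarrow> h q < h p) \<and>
 (\<forall>v. free V M v \<longrightarrow> v \<in> inS s) \<and>
 (\<forall>z\<in>inS s. (\<exists>e\<in>M. z \<in> e) \<longrightarrow> mate M z \<in> inS s) \<and>
 (\<forall>u\<in>evenV s. \<forall>w. {u,w} \<in> E \<longrightarrow>
     (lcp s u + 2 < delta s \<or> (lcp s u + 2 = delta s \<and> stg s \<noteq> Grow)) \<longrightarrow> w \<in> inS s) \<and>
 (\<forall>u\<in>evenV s. \<forall>v\<in>oddV s. {u,v} \<in> E \<longrightarrow> lcpo s v \<le> lcp s u + 1)"

lemma InvI:
  assumes "\<forall>z. lcpo s z < delta s"
 "\<forall>u\<in>evenV s. even (lcp s u)"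
 "\<forall>z\<in>oddV s. odd (lcpo s z)"
 "oddV s \<inter> evenV s = {}"
 "\<forall>B1\<in>blossoms s. \<forall>B2\<in>blossoms s. B1 \<noteq> B2 \<longrightarrow> B1 \<inter> B2 = {}"
 "\<forall>p\<in>nodes s. \<forall>q. par s p = Some q \<longrightarrow> q \<in> nodes s"
 "\<exists>h::'a node \<Rightarrow> nat. \<forall>p\<in>nodes s. \<forall>q. par s p = Some q \<longrightarrow> h q < h p"
 "\<forall>v. free V M v \<longrightarrow> v \<in> inS s"
 "\<forall>z\<in>inS s. (\<exists>e\<in>M. z \<in> e) \<longrightarrow> mate M z \<in> inS s"
 "\<forall>u\<in>evenV s. \<forall>w. {u,w} \<in> E \<longrightarrow>
     (lcp s u + 2 < delta s \<or> (lcp s u + 2 = delta s \<and> stg s \<noteq> Grow)) \<longrightarrow> w \<in> inS s"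
 "\<forall>u\<in>evenV s. \<forall>v\<in>oddV s. {u,v} \<in> E \<longrightarrow> lcpo s v \<le> lcp s u + 1"
  shows "Inv V E M s"
  unfolding Inv_def by (intro conjI assms)

lemma InvD1:
  assumes "Inv V E M s"
  shows "\<forall>z. lcpo s z < delta s"
  using assms unfolding Inv_def by simp

lemma InvD2:
  assumes "Inv V E M s"
  shows "\<forall>u\<in>evenV s. even (lcp s u)"
  using assms unfolding Inv_def by simp

lemma InvD3:
  assumes "Inv V E M s"
  shows "\<forall>z\<in>oddV s. odd (lcpo s z)"
  using assms unfolding Inv_def by simp

lemma InvD4:
  assumes "Inv V E M s"
  shows "oddV s \<inter> evenV s = {}"
  using assms unfolding Inv_def by simp

lemma InvD5:
  assumes "Inv V E M s"
  shows "\<forall>B1\<in>blossoms s. \<forall>B2\<in>blossoms s. B1 \<noteq> B2 \<longrightarrow> B1 \<inter> B2 = {}"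
  using assms unfolding Inv_def by simp

lemma InvD6:
  assumes "Inv V E M s"
  shows "\<forall>p\<in>nodes s. \<forall>q. par s p = Some q \<longrightarrow> q \<in> nodes s"
  using assms unfolding Inv_def by simp

lemma InvD7:
  assumes "Inv V E M s"
  shows "\<exists>h::'a node \<Rightarrow> nat. \<forall>p\<in>nodes s. \<forall>q. par s p = Some q \<longrightarrow> h q < h p"
  using assms unfolding Inv_def by simp

lemma InvD8:
  assumes "Inv V E M s"
  shows "\<forall>v. free V M v \<longrightarrow> v \<in> inS s"
  using assms unfolding Inv_def by simp

lemma InvD9:
  assumes "Inv V E M s"
  shows "\<forall>z\<in>inS s. (\<exists>e\<in>M. z \<in> e) \<longrightarrow> mate M z \<in> inS s"
  using assms unfolding Inv_def by simp

lemma InvD10: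
  assumes "Inv V E M s"
  shows "\<forall>u\<in>evenV s. \<forall>w. {u,w} \<in> E \<longrightarrow>
     (lcp s u + 2 < delta s \<or> (lcp s u + 2 = delta s \<and> stg s \<noteq> Grow)) \<longrightarrow> w \<in> inS s"
  using assms unfolding Inv_def by simp

lemma InvD11:
  assumes "Inv V E M s"
  shows "\<forall>u\<in>evenV s. \<forall>v\<in>oddV s. {u,v} \<in> E \<longrightarrow> lcpo s v \<le> lcp s u + 1"
  using assms unfolding Inv_def by simp

lemmas InvD = InvD1 InvD2 InvD3 InvD4 InvD5 InvD6 InvD7 InvD8 InvD9 InvD10 InvD11

lemma Inv_init: "Inv V E M (init V M)"
proof -
  have ev: "evenV (init V M) = {v. free V M v}"
    unfolding evenV_def blossoms_def init_def by auto
  have od: "oddV (init V M) = {}" unfolding oddV_def init_def by simp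
  have bl: "blossoms (init V M) = {{v} | v. free V M v}" unfolding blossoms_def init_def by simp
  have iS: "inS (init V M) = {v. free V M v}" unfolding inS_def ev od by simp
  show ?thesis
  proof (rule InvI)
    show "\<forall>z\<in>inS (init V M). (\<exists>e\<in>M. z \<in> e) \<longrightarrow> mate M z \<in> inS (init V M)"
      unfolding iS free_def by blast
    show "\<forall>B1\<in>blossoms (init V M). \<forall>B2\<in>blossoms (init V M). B1 \<noteq> B2 \<longrightarrow> B1 \<inter> B2 = {}"
      unfolding bl by blast
  qed (simp_all add: od iS ev, simp_all add: init_def)
qed

lemma Inv_stop:
  assumes "Inv V E M s" "stg s = Bridge"
  shows "Inv V E M (s\<lparr>stg := Stopped\<rparr>)"
proof -
  define s' where "s' = s\<lparr>stg := Stopped\<rparr>"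
  have eq: "evenV s' = evenV s" "oddV s' = oddV s" "inS s' = inS s" "blossoms s' = blossoms s"
    "nodes s' = nodes s" "par s' = par s" "lcp s' = lcp s" "lcpo s' = lcpo s" "delta s' = delta s"
    "stg s' = Stopped"
    unfolding s'_def evenV_def oddV_def inS_def blossoms_def by simp_all
  note D = InvD[OF assms(1)]
  have "Inv V E M s'"
    apply (rule InvI)
    unfolding eq using D assms(2) by simp_all
  then show ?thesis unfolding s'_def .
qed

lemma Inv_growth_done:
  assumes "Inv V E M s" "\<not> (\<exists>v x. growth_enabled E s v x)" "stg s = Grow"
  shows "Inv V E M (s\<lparr>stg := Bridge\<rparr>)"
proof -
  define s' where "s' = s\<lparr>stg := Bridge\<rparr>"
  have eq: "evenV s' = evenV s" "oddV s' = oddV s" "inS s' = inS s" "blossoms s' = blossoms s"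
    "nodes s' = nodes s" "par s' = par s" "lcp s' = lcp s" "lcpo s' = lcpo s" "delta s' = delta s"
    "stg s' = Bridge"
    unfolding s'_def evenV_def oddV_def inS_def blossoms_def by simp_all
  note D = InvD[OF assms(1)]
  have c10: "w \<in> inS s" if "u \<in> evenV s" "{u,w} \<in> E" "lcp s u + 2 \<le> delta s" for u w
  proof (cases "lcp s u + 2 < delta s")
    case True then show ?thesis using D(10) that by blast
  next
    case False
    then have l: "lcp s u + 2 = delta s" using that by simp
    have "even (lcp s u)" using D(2) that by blast
    then have "even (delta s)" using l by (metis even_add even_numeral)
    show ?thesis
    proof (rule ccontr)
      assume "w \<notin> inS s"
      then have "growth_enabled E s u w" using l that \<open>even (delta s)\<close> unfolding growth_enabled_def by simp
      then show False using assms(2) by blast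
    qed
  qed
  have "Inv V E M s'"
  proof (rule InvI)
    show "\<forall>u\<in>evenV s'. \<forall>w. {u,w} \<in> E \<longrightarrow>
     (lcp s' u + 2 < delta s' \<or> (lcp s' u + 2 = delta s' \<and> stg s' \<noteq> Grow)) \<longrightarrow> w \<in> inS s'"
      unfolding eq
    proof (intro ballI allI impI)
      fix u w assume "u \<in> evenV s" "{u,w} \<in> E"
        "lcp s u + 2 < delta s \<or> (lcp s u + 2 = delta s \<and> Bridge \<noteq> Grow)"
      then show "w \<in> inS s" using c10[of u w] by linarith
    qed
  qed (unfold eq, (rule D)+)
  then show ?thesis unfolding s'_def .
qed

lemma Inv_next:
  assumes "Inv V E M s" "stg s = Bridge"
  shows "Inv V E M (s\<lparr>delta := delta s + 1, stg := Grow\<rparr>)"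
proof -
  define s' where "s' = s\<lparr>delta := delta s + 1, stg := Grow\<rparr>"
  have eq: "evenV s' = evenV s" "oddV s' = oddV s" "inS s' = inS s" "blossoms s' = blossoms s"
    "nodes s' = nodes s" "par s' = par s" "lcp s' = lcp s" "lcpo s' = lcpo s" "delta s' = delta s + 1"
    "stg s' = Grow"
    unfolding s'_def evenV_def oddV_def inS_def blossoms_def by simp_all
  note D = InvD[OF assms(1)]
  have c10: "w \<in> inS s" if "u \<in> evenV s" "{u,w} \<in> E" "lcp s u + 2 < delta s + 1" for u w
  proof -
    have "lcp s u + 2 < delta s \<or> (lcp s u + 2 = delta s \<and> stg s \<noteq> Grow)" using that assms(2) by auto
    then show ?thesis using D(10) that by blast
  qed
  have "Inv V E M s'"
  proof (rule InvI)
    show "\<forall>z. lcpo s' z < delta s'" unfolding eq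
    proof
      fix z have "lcpo s z < delta s" using D(1) by blast
      then show "lcpo s z < delta s + 1" by simp
    qed
    show "\<forall>u\<in>evenV s'. \<forall>w. {u,w} \<in> E \<longrightarrow>
     (lcp s' u + 2 < delta s' \<or> (lcp s' u + 2 = delta s' \<and> stg s' \<noteq> Grow)) \<longrightarrow> w \<in> inS s'"
      unfolding eq
    proof (intro ballI allI impI)
      fix u w assume "u \<in> evenV s" "{u,w} \<in> E"
        "lcp s u + 2 < delta s + 1 \<or> (lcp s u + 2 = delta s + 1 \<and> Grow \<noteq> Grow)"
      then show "w \<in> inS s" using c10[of u w] by blast
    qed
  qed (unfold eq, (rule D)+)
  then show ?thesis unfolding s'_def .
qed



lemma Inv_grow:
  assumes I: "Inv V E M s" and g: "graph V E" and mt: "matching E M"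
    and st: "stg s = Grow" and en: "growth_enabled E s w x"
  shows "Inv V E M (grow M s w x)"
proof -
  note D = InvD[OF I]
  have I1: "\<forall>z. lcpo s z < delta s" by (rule D(1))
  have I2: "\<forall>u\<in>evenV s. even (lcp s u)" by (rule D(2))
  have I3: "\<forall>z\<in>oddV s. odd (lcpo s z)" by (rule D(3))
  have I4: "oddV s \<inter> evenV s = {}" by (rule D(4))
  have I5: "\<forall>B1\<in>blossoms s. \<forall>B2\<in>blossoms s. B1 \<noteq> B2 \<longrightarrow> B1 \<inter> B2 = {}" by (rule D(5))
  have I6: "\<forall>p\<in>nodes s. \<forall>q. par s p = Some q \<longrightarrow> q \<in> nodes s" by (rule D(6))
  obtain h :: "'a node \<Rightarrow> nat" where I7: "\<forall>p\<in>nodes s. \<forall>q. par s p = Some q \<longrightarrow> h q < h p" using D(7) by blast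
  have I8: "\<forall>v. free V M v \<longrightarrow> v \<in> inS s" by (rule D(8))
  have I9: "\<forall>z\<in>inS s. (\<exists>e\<in>M. z \<in> e) \<longrightarrow> mate M z \<in> inS s" by (rule D(9))
  have I10: "\<forall>u\<in>evenV s. \<forall>w. {u,w} \<in> E \<longrightarrow>
     (lcp s u + 2 < delta s \<or> (lcp s u + 2 = delta s \<and> stg s \<noteq> Grow)) \<longrightarrow> w \<in> inS s" by (rule D(10))
  have I11: "\<forall>u\<in>evenV s. \<forall>v\<in>oddV s. {u,v} \<in> E \<longrightarrow> lcpo s v \<le> lcp s u + 1" by (rule D(11))
  have ev: "even (delta s)" and wev: "w \<in> evenV s" and lw: "lcp s w + 2 = delta s"
    and wx: "{w,x} \<in> E" and xn: "x \<notin> inS s" using en unfolding growth_enabled_def by auto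
  have xV: "x \<in> V" using g wx unfolding graph_def by (metis doubleton_eq_iff)
  have "\<not> free V M x" using I8 xn by blast
  then obtain e where e: "e \<in> M" "x \<in> e" using xV unfolding free_def by blast
  define m where "m = mate M x"
  obtain m' where m': "e = {x,m'}" "m' \<noteq> x" "mate M x = m'" "mate M m' = x"
    using mate_lemma[OF g mt e] by blast
  have mx: "m \<noteq> x" "mate M m = x" "m \<in> e" using m' m_def by auto
  have mn: "m \<notin> inS s" using I9 mx e xn by metis
  define Bw where "Bw = blossom_of s w"
  have Bw: "Bw \<in> blossoms s" "w \<in> Bw" using blossom_of_prop[OF I5 wev] Bw_def by auto
  have nodes': "nodes (grow M s w x) = nodes s \<union> {Inl x, Inr {m}}"
    unfolding grow_def m_def by simp
  have odd': "oddV (grow M s w x) = insert x (oddV s)" unfolding oddV_def nodes' by auto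
  have bl': "blossoms (grow M s w x) = insert {m} (blossoms s)" unfolding blossoms_def nodes' by auto
  have even': "evenV (grow M s w x) = insert m (evenV s)" unfolding evenV_def bl' by auto
  have inS': "inS (grow M s w x) = inS s \<union> {x, m}" unfolding inS_def odd' even' by auto
  have lcp': "lcp (grow M s w x) = (lcp s)(m := delta s)" unfolding grow_def m_def by simp
  have lcpo': "lcpo (grow M s w x) = (lcpo s)(x := delta s - 1)" unfolding grow_def by simp
  have dl': "delta (grow M s w x) = delta s" "stg (grow M s w x) = stg s" unfolding grow_def by simp_all
  have par': "par (grow M s w x) = (par s)(Inl x := Some (Inr Bw), Inr {m} := Some (Inl x))"
    unfolding grow_def m_def Bw_def by simp
  have xo: "x \<notin> oddV s" "x \<notin> evenV s" "m \<notin> oddV s" "m \<notin> evenV s"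
    using xn mn unfolding inS_def by auto
  have xnode: "Inl x \<notin> nodes s" "Inr {m} \<notin> nodes s"
    using xo unfolding oddV_def evenV_def blossoms_def by auto
  have dpos: "delta s \<ge> 2" using ev lw by simp
  have c1: "\<forall>z. lcpo (grow M s w x) z < delta (grow M s w x)"
    using I1 dpos by (simp add: lcpo' dl')
  have c2: "\<forall>u\<in>evenV (grow M s w x). even (lcp (grow M s w x) u)"
    using I2 ev by (simp add: even' lcp')
  have c3: "\<forall>z\<in>oddV (grow M s w x). odd (lcpo (grow M s w x) z)"
    using I3 ev dpos xo by (auto simp: odd' lcpo')
  have c4: "oddV (grow M s w x) \<inter> evenV (grow M s w x) = {}"
    using I4 xo mx by (auto simp: odd' even')
  have c5: "\<forall>B1\<in>blossoms (grow M s w x). \<forall>B2\<in>blossoms (grow M s w x). B1 \<noteq> B2 \<longrightarrow> B1 \<inter> B2 = {}"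
    using I5 xo unfolding bl' evenV_def by blast
  have Bwn: "Inr Bw \<in> nodes s" using Bw unfolding blossoms_def by simp
  have c6: "\<forall>p\<in>nodes (grow M s w x). \<forall>q. par (grow M s w x) p = Some q \<longrightarrow> q \<in> nodes (grow M s w x)"
    using I6 xnode Bwn unfolding nodes' par' by auto
  define h' where "h' = h(Inl x := h (Inr Bw) + 1, Inr {m} := h (Inr Bw) + 2)"
  have "\<forall>p\<in>nodes (grow M s w x). \<forall>q. par (grow M s w x) p = Some q \<longrightarrow> h' q < h' p"
  proof (intro ballI allI impI)
    fix p q assume p: "p \<in> nodes (grow M s w x)" "par (grow M s w x) p = Some q"
    show "h' q < h' p"
    proof (cases "p = Inl x \<or> p = Inr {m}")
      case True then show ?thesis using p Bwn xnode unfolding par' h'_def by auto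
    next
      case False
      then have "p \<in> nodes s" "par s p = Some q" using p unfolding nodes' par' by auto
      moreover then have "q \<in> nodes s" using I6 by blast
      ultimately show ?thesis using I7 xnode False unfolding h'_def by auto
    qed
  qed
  then have c7: "\<exists>h::'a node \<Rightarrow> nat. \<forall>p\<in>nodes (grow M s w x). \<forall>q. par (grow M s w x) p = Some q \<longrightarrow> h q < h p"
    by blast
  have c8: "\<forall>v. free V M v \<longrightarrow> v \<in> inS (grow M s w x)" using I8 by (simp add: inS')
  have c9: "\<forall>z\<in>inS (grow M s w x). (\<exists>e\<in>M. z \<in> e) \<longrightarrow> mate M z \<in> inS (grow M s w x)"
    using I9 mx m_def by (auto simp: inS')
  have c10: "\<forall>u\<in>evenV (grow M s w x). \<forall>w'. {u,w'} \<in> E \<longrightarrow>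
     (lcp (grow M s w x) u + 2 < delta (grow M s w x) \<or> (lcp (grow M s w x) u + 2 = delta (grow M s w x) \<and> stg (grow M s w x) \<noteq> Grow)) \<longrightarrow> w' \<in> inS (grow M s w x)"
    using I10 xo st by (auto simp: even' lcp' dl' inS')
  have c11: "\<forall>u\<in>evenV (grow M s w x). \<forall>v\<in>oddV (grow M s w x). {u,v} \<in> E \<longrightarrow> lcpo (grow M s w x) v \<le> lcp (grow M s w x) u + 1"
  proof (intro ballI impI)
    fix u v assume u: "u \<in> evenV (grow M s w x)" and v: "v \<in> oddV (grow M s w x)" and uv: "{u,v} \<in> E"
    show "lcpo (grow M s w x) v \<le> lcp (grow M s w x) u + 1"
    proof (cases "u = m")
      case True
      have "lcpo s v < delta s" using I1 by blast
      then show ?thesis using True by (auto simp: lcp' lcpo')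
    next
      case False
      then have ue: "u \<in> evenV s" using u by (simp add: even')
      show ?thesis
      proof (cases "v = x")
        case True
        have "\<not> lcp s u + 2 < delta s" using I10 ue uv True xn by blast
        then show ?thesis using True False by (simp add: lcp' lcpo')
      next
        case False
        then have "v \<in> oddV s" using v by (simp add: odd')
        then show ?thesis using I11 ue uv False \<open>u \<noteq> m\<close> by (simp add: lcp' lcpo')
      qed
    qed
  qed
  show ?thesis by (rule InvI[OF c1 c2 c3 c4 c5 c6 c7 c8 c9 c10 c11])
qed



lemma Inv_merge:
  assumes I: "Inv V E M s" and st: "stg s = Bridge" and en: "bridge_enabled E M s x y"
    and same: "same_tree s x y"
  shows "Inv V E M (merge s x y)"
proof -
  note D = InvD[OF I]
  have I1: "\<forall>z. lcpo s z < delta s" by (rule D(1))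
  have I2: "\<forall>u\<in>evenV s. even (lcp s u)" by (rule D(2))
  have I3: "\<forall>z\<in>oddV s. odd (lcpo s z)" by (rule D(3))
  have I4: "oddV s \<inter> evenV s = {}" by (rule D(4))
  have I5: "\<forall>B1\<in>blossoms s. \<forall>B2\<in>blossoms s. B1 \<noteq> B2 \<longrightarrow> B1 \<inter> B2 = {}" by (rule D(5))
  have I6: "\<forall>p\<in>nodes s. \<forall>q. par s p = Some q \<longrightarrow> q \<in> nodes s" by (rule D(6))
  obtain h :: "'a node \<Rightarrow> nat" where I7: "\<forall>p\<in>nodes s. \<forall>q. par s p = Some q \<longrightarrow> h q < h p" using D(7) by blast
  have I8: "\<forall>v. free V M v \<longrightarrow> v \<in> inS s" by (rule D(8))
  have I9: "\<forall>z\<in>inS s. (\<exists>e\<in>M. z \<in> e) \<longrightarrow> mate M z \<in> inS s" by (rule D(9))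
  have I10: "\<forall>u\<in>evenV s. \<forall>w. {u,w} \<in> E \<longrightarrow>
     (lcp s u + 2 < delta s \<or> (lcp s u + 2 = delta s \<and> stg s \<noteq> Grow)) \<longrightarrow> w \<in> inS s" by (rule D(10))
  have I11: "\<forall>u\<in>evenV s. \<forall>v\<in>oddV s. {u,v} \<in> E \<longrightarrow> lcpo s v \<le> lcp s u + 1" by (rule D(11))
  have xe: "x \<in> evenV s" and ye: "y \<in> evenV s" and lxy: "lcp s x + lcp s y + 2 = 2 * delta s"
    using en unfolding bridge_enabled_def by auto
  define Bx where "Bx = blossom_of s x"
  define By where "By = blossom_of s y"
  have Bx: "Bx \<in> blossoms s" "x \<in> Bx" using blossom_of_prop[OF I5 xe] Bx_def by auto
  have By: "By \<in> blossoms s" using blossom_of_prop[OF I5 ye] By_def by auto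
  define a where "a = (Inr Bx :: 'a node)"
  define b where "b = (Inr By :: 'a node)"
  define c where "c = lca s a b"
  define P where "P = tpath s a c \<union> tpath s b c"
  define Z where "Z = {z. Inl z \<in> P}"
  define N where "N = \<Union> (node_set ` P)"
  have an: "a \<in> nodes s" "b \<in> nodes s" using Bx By unfolding a_def b_def blossoms_def by auto
  obtain d where "anc s a d" "anc s b d" using same unfolding same_tree_def a_def b_def Bx_def By_def by blast
  then have ac: "anc s a c" "anc s b c" using lca_prop[OF I7] c_def by blast+
  have cn: "c \<in> nodes s" using anc_nodes[OF I6 ac(1) an(1)] .
  have Pn: "P \<subseteq> nodes s" unfolding P_def tpath_def using anc_nodes[OF I6] an by blast
  have aP: "a \<in> P" unfolding P_def tpath_def using ac by (auto simp: anc_def)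
  have hP: "h c \<le> h p" if "p \<in> P" for p
  proof -
    have "anc s p c" using that unfolding P_def tpath_def by blast
    then show ?thesis using anc_pot[OF I7] by fastforce
  qed
  have ZO: "Z \<subseteq> oddV s" using Pn unfolding Z_def oddV_def by auto
  have ZN: "Z \<subseteq> N" unfolding Z_def N_def node_set_def by force
  have BN: "B \<subseteq> N" if "Inr B \<in> P" for B using that unfolding N_def node_set_def by force
  have Nsplit: "z \<in> Z \<or> (\<exists>B. Inr B \<in> P \<and> B \<in> blossoms s \<and> z \<in> B)" if zN: "z \<in> N" for z
  proof -
    obtain n where n: "n \<in> P" "z \<in> node_set n" using zN unfolding N_def by blast
    show ?thesis
    proof (cases n)
      case (Inl z') then show ?thesis using n unfolding Z_def node_set_def by auto
    next
      case (Inr B) then show ?thesis using n Pn unfolding node_set_def blossoms_def by auto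
    qed
  qed
  have NE: "N \<subseteq> evenV s \<union> Z" using Nsplit unfolding evenV_def by blast
  have xN: "x \<in> N" using BN aP Bx unfolding a_def by blast
  have NnotOld: "Inr N \<notin> nodes s - P"
  proof
    assume "Inr N \<in> nodes s - P"
    then have "N \<in> blossoms s" "N \<noteq> Bx" using aP unfolding blossoms_def a_def by auto
    then show False using I5 Bx xN by blast
  qed
  have ms: "merge s x y = s\<lparr> nodes := (nodes s - P) \<union> {Inr N},
           par := (\<lambda>n. if n = Inr N then par s c
                       else (case par s n of None \<Rightarrow> None
                             | Some p \<Rightarrow> if p \<in> P then Some (Inr N) else Some p)),
           bse := (bse s)(N := node_base s c),
           lcp := (\<lambda>z. if z \<in> Z then lcp s x + 1 + lcp s y - lcpo s z else lcp s z) \<rparr>"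
    unfolding merge_def Let_def a_def b_def c_def P_def Z_def N_def Bx_def By_def by simp
  define s' where "s' = merge s x y"
  have nodes': "nodes s' = (nodes s - P) \<union> {Inr N}" unfolding s'_def ms by simp
  have par': "par s' = (\<lambda>n. if n = Inr N then par s c
                       else (case par s n of None \<Rightarrow> None
                             | Some p \<Rightarrow> if p \<in> P then Some (Inr N) else Some p))"
    unfolding s'_def ms by simp
  have lcp': "lcp s' = (\<lambda>z. if z \<in> Z then lcp s x + 1 + lcp s y - lcpo s z else lcp s z)"
    unfolding s'_def ms by simp
  have oth: "lcpo s' = lcpo s" "delta s' = delta s" "stg s' = stg s" unfolding s'_def ms by simp_all
  have odd': "oddV s' = oddV s - Z" unfolding oddV_def nodes' Z_def by auto
  have bl': "blossoms s' = {B \<in> blossoms s. Inr B \<notin> P} \<union> {N}" unfolding blossoms_def nodes' by auto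
  have even': "evenV s' = evenV s \<union> Z"
  proof
    show "evenV s' \<subseteq> evenV s \<union> Z" unfolding evenV_def bl' using NE unfolding evenV_def by blast
    show "evenV s \<union> Z \<subseteq> evenV s'"
    proof
      fix z assume "z \<in> evenV s \<union> Z"
      then show "z \<in> evenV s'"
      proof
        assume "z \<in> evenV s"
        then obtain B where "B \<in> blossoms s" "z \<in> B" unfolding evenV_def by blast
        then show ?thesis using BN unfolding evenV_def bl' by (cases "Inr B \<in> P") auto
      qed (use ZN in \<open>auto simp: evenV_def bl'\<close>)
    qed
  qed
  have inS': "inS s' = inS s" unfolding inS_def odd' even' using ZO by auto
  have lZ: "lcp s' z = 2 * delta s - 1 - lcpo s z" "lcp s' z \<ge> delta s" if "z \<in> Z" for z
    using that lxy I1[rule_format, of z] unfolding lcp' by auto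
  have lnZ: "lcp s' z = lcp s z" if "z \<notin> Z" for z using that unfolding lcp' by auto
  have c1: "\<forall>z. lcpo s' z < delta s'" using I1 oth by simp
  have c2: "\<forall>u\<in>evenV s'. even (lcp s' u)"
  proof
    fix u assume u: "u \<in> evenV s'"
    show "even (lcp s' u)"
    proof (cases "u \<in> Z")
      case True
      then have "odd (lcpo s u)" using I3 ZO by blast
      then obtain k where k: "lcpo s u = 2 * k + 1" by (metis oddE)
      have "lcpo s u < delta s" using I1 by blast
      then show ?thesis using lZ(1)[OF True] k by simp
    next
      case False then show ?thesis using u I2 lnZ by (simp add: even')
    qed
  qed
  have c3: "\<forall>z\<in>oddV s'. odd (lcpo s' z)" using I3 by (simp add: odd' oth)
  have c4: "oddV s' \<inter> evenV s' = {}" using I4 by (auto simp: odd' even')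
  have NB: "N \<inter> B = {}" if B: "B \<in> blossoms s" "Inr B \<notin> P" for B
  proof -
    have "z \<notin> B" if zN: "z \<in> N" for z
    proof -
      from Nsplit[OF zN] show ?thesis
      proof
        assume "z \<in> Z"
        then have "z \<in> oddV s" using ZO by blast
        moreover have "B \<subseteq> evenV s" unfolding evenV_def using B(1) by (rule Union_upper)
        ultimately show ?thesis using I4 by blast
      next
        assume "\<exists>B'. Inr B' \<in> P \<and> B' \<in> blossoms s \<and> z \<in> B'"
        then obtain B' where B': "Inr B' \<in> P" "B' \<in> blossoms s" "z \<in> B'" by blast
        then have "B' \<noteq> B" using B(2) by metis
        then have "B' \<inter> B = {}" using I5 B'(2) B(1) by blast
        then show ?thesis using B'(3) by (simp add: disjoint_iff)
      qed
    qed
    then show ?thesis by (simp add: disjoint_iff)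
  qed
  have c5: "\<forall>B1\<in>blossoms s'. \<forall>B2\<in>blossoms s'. B1 \<noteq> B2 \<longrightarrow> B1 \<inter> B2 = {}"
  proof (intro ballI impI)
    fix B1 B2 assume B12: "B1 \<in> blossoms s'" "B2 \<in> blossoms s'" "B1 \<noteq> B2"
    show "B1 \<inter> B2 = {}"
    proof (cases "B1 = N")
      case True
      then have "B2 \<in> blossoms s" "Inr B2 \<notin> P" using B12 unfolding bl' by auto
      then show ?thesis using NB True by simp
    next
      case False
      then have b1: "B1 \<in> blossoms s" "Inr B1 \<notin> P" using B12 unfolding bl' by auto
      show ?thesis
      proof (cases "B2 = N")
        case True then show ?thesis using NB[OF b1] by (simp add: Int_commute)
      next
        case False
        then have "B2 \<in> blossoms s" using B12 unfolding bl' by auto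
        then show ?thesis using I5 b1(1) B12(3) by blast
      qed
    qed
  qed
  define h' where "h' = (\<lambda>n. if n = Inr N then h c else h n)"
  have c67: "q \<in> nodes s' \<and> h' q < h' p" if p: "p \<in> nodes s'" "par s' p = Some q" for p q
  proof (cases "p = Inr N")
    case True
    then have pc: "par s c = Some q" using p(2) unfolding par' by simp
    then have qn: "q \<in> nodes s" "h q < h c" using I6 I7 cn by blast+
    then have "q \<notin> P" using hP by fastforce
    then have "q \<noteq> Inr N" using NnotOld qn by blast
    then show ?thesis using qn \<open>q \<notin> P\<close> True unfolding nodes' h'_def by auto
  next
    case False
    then have pn: "p \<in> nodes s" "p \<notin> P" using p(1) unfolding nodes' by auto
    obtain r where r: "par s p = Some r" using p(2) False unfolding par' by (cases "par s p") auto
    have rn: "r \<in> nodes s" "h r < h p" using r pn I6 I7 by blast+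
    show ?thesis
    proof (cases "r \<in> P")
      case True
      then have "q = Inr N" using p(2) False r unfolding par' by simp
      then show ?thesis using hP[OF True] rn False unfolding nodes' h'_def by auto
    next
      case f2: False
      then have "q = r" using p(2) False r unfolding par' by simp
      moreover have "r \<noteq> Inr N" using NnotOld rn f2 by blast
      ultimately show ?thesis using rn f2 False unfolding nodes' h'_def by auto
    qed
  qed
  have c6: "\<forall>p\<in>nodes s'. \<forall>q. par s' p = Some q \<longrightarrow> q \<in> nodes s'" using c67 by blast
  have c7: "\<exists>h::'a node \<Rightarrow> nat. \<forall>p\<in>nodes s'. \<forall>q. par s' p = Some q \<longrightarrow> h q < h p" using c67 by blast
  have c8: "\<forall>v. free V M v \<longrightarrow> v \<in> inS s'" using I8 inS' by simp
  have c9: "\<forall>z\<in>inS s'. (\<exists>e\<in>M. z \<in> e) \<longrightarrow> mate M z \<in> inS s'" using I9 inS' by simp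
  have c10: "\<forall>u\<in>evenV s'. \<forall>w. {u,w} \<in> E \<longrightarrow>
     (lcp s' u + 2 < delta s' \<or> (lcp s' u + 2 = delta s' \<and> stg s' \<noteq> Grow)) \<longrightarrow> w \<in> inS s'"
  proof (intro ballI allI impI)
    fix u w assume u: "u \<in> evenV s'" and uw: "{u,w} \<in> E"
      and cnd: "lcp s' u + 2 < delta s' \<or> (lcp s' u + 2 = delta s' \<and> stg s' \<noteq> Grow)"
    have "u \<notin> Z" using lZ(2) cnd oth by fastforce
    then show "w \<in> inS s'" using u uw cnd I10 lnZ oth inS' even' by auto
  qed
  have c11: "\<forall>u\<in>evenV s'. \<forall>v\<in>oddV s'. {u,v} \<in> E \<longrightarrow> lcpo s' v \<le> lcp s' u + 1"
  proof (intro ballI impI)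
    fix u v assume u: "u \<in> evenV s'" and v: "v \<in> oddV s'" and uv: "{u,v} \<in> E"
    show "lcpo s' v \<le> lcp s' u + 1"
    proof (cases "u \<in> Z")
      case True then show ?thesis using lZ(2)[OF True] I1[rule_format, of v] oth by simp
    next
      case False then show ?thesis using u v uv I11 lnZ oth even' odd' by auto
    qed
  qed
  show ?thesis unfolding s'_def[symmetric] by (rule InvI[OF c1 c2 c3 c4 c5 c6 c7 c8 c9 c10 c11])
qed



lemma reachable_Inv:
  assumes "reachable V E M s" "graph V E" "matching E M"
  shows "Inv V E M s"
  using assms(1)
proof (induction rule: reachable.induct)
  case start then show ?case by (rule Inv_init)
next
  case (continue s s')
  from continue.hyps(2) continue.IH show ?case
  proof (cases rule: step.cases)
    case (growth v x) then show ?thesis using Inv_grow[OF continue.IH assms(2,3)] by blast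
  next
    case growth_done then show ?thesis using Inv_growth_done[OF continue.IH] by blast
  next
    case (bridge_stop x y) then show ?thesis using Inv_stop[OF continue.IH] by blast
  next
    case (bridge_merge x y) then show ?thesis using Inv_merge[OF continue.IH] by blast
  next
    case next_phase then show ?thesis using Inv_next[OF continue.IH] by blast
  qed
qed

theorem lemma3:
  fixes V :: "'a set" and E M :: "'a set set" and s s' :: "'a sstate" and x y u v :: 'a
  assumes "graph V E" and "matching E M"
    and "reachable V E M s"
    and "stg s = Bridge"
    and "bridge_enabled E M s x y"
    and "same_tree s x y"
    and "s' = merge s x y"
    and "v \<in> oddV s"
    and "Inl v \<in> tpath s (Inr (blossom_of s y))
                   (lca s (Inr (blossom_of s x)) (Inr (blossom_of s y)))"
    and "{u, v} \<in> E" and "{u, v} \<notin> M"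
    and "u \<in> evenV s"
  shows "v \<in> evenV s' \<and> lcp s x + lcp s y \<le> lcp s' v + lcp s' u"
proof -
  have I: "Inv V E M s" using reachable_Inv assms(1-3) by blast
  have I1: "\<forall>z. lcpo s z < delta s" by (rule InvD1[OF I])
  have I11: "\<forall>u\<in>evenV s. \<forall>v\<in>oddV s. {u,v} \<in> E \<longrightarrow> lcpo s v \<le> lcp s u + 1"
    by (rule InvD11[OF I])
  have lxy: "lcp s x + lcp s y + 2 = 2 * delta s"
    using assms(5) unfolding bridge_enabled_def by auto
  define a where "a = (Inr (blossom_of s x) :: 'a node)"
  define b where "b = (Inr (blossom_of s y) :: 'a node)"
  define c where "c = lca s a b"
  define P where "P = tpath s a c \<union> tpath s b c"
  define Z where "Z = {z. Inl z \<in> P}"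
  define N where "N = \<Union> (node_set ` P)"
  have ms: "s' = s\<lparr> nodes := (nodes s - P) \<union> {Inr N},
           par := (\<lambda>n. if n = Inr N then par s c
                       else (case par s n of None \<Rightarrow> None
                             | Some p \<Rightarrow> if p \<in> P then Some (Inr N) else Some p)),
           bse := (bse s)(N := node_base s c),
           lcp := (\<lambda>z. if z \<in> Z then lcp s x + 1 + lcp s y - lcpo s z else lcp s z) \<rparr>"
    unfolding assms(7) merge_def Let_def a_def b_def c_def P_def Z_def N_def by simp
  have vZ: "v \<in> Z" using assms(9) unfolding Z_def P_def a_def b_def c_def by blast
  have vN: "v \<in> N" using vZ unfolding Z_def N_def node_set_def by force
  have "N \<in> blossoms s'" unfolding blossoms_def ms by simp
  then have ve: "v \<in> evenV s'" using vN unfolding evenV_def by blast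
  have lv: "lcp s' v = lcp s x + 1 + lcp s y - lcpo s v" using vZ unfolding ms by simp
  have lu: "lcp s' u = (if u \<in> Z then lcp s x + 1 + lcp s y - lcpo s u else lcp s u)"
    unfolding ms by simp
  have a1: "lcpo s v < delta s" "lcpo s u < delta s" using I1 by blast+
  have a2: "lcpo s v \<le> lcp s u + 1" using I11 assms(8,10,12) by blast
  have "lcp s x + lcp s y \<le> lcp s' v + lcp s' u"
  proof (cases "u \<in> Z")
    case True
    then show ?thesis unfolding lv lu using a1 lxy by simp
  next
    case False
    then show ?thesis unfolding lv lu using a1 a2 lxy by simp
  qed
  then show ?thesis using ve by blast
qed

end
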